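(* Let $p_0,p_1,p_2$ be positive integers with $\gcd(p_0,p_1,p_2)=1$, and put $n=p_0+p_1+p_2$. Let $E=(\mathbb{Z}/n\mathbb{Z})\times\{0,1,2\}$ (a set of $3n$ elements) and define permutations $\sigma_0,\sigma_1$ of $E$ by $$\sigma_0(m,0)=(m,1),\quad \sigma_0(m,1)=(m,2),\quad \sigma_0(m,2)=(m,0),$$ $$\sigma_1(m,0)=(m-p_1,2),\quad \sigma_1(m,1)=(m-p_2,0),\quad \sigma_1(m,2)=(m-p_0,1),$$ with arithmetic in the first coordinate taken modulo $n$. Let $G=\langle\sigma_0,\sigma_1\rangle$ (the monodromy group of the dessin $D(p_0,p_1,p_2)$ on the billiards surface of the triangle with angles $p_0\pi/n,p_1\pi/n,p_2\pi/n$), $N=\langle\sigma_0\sigma_1,\sigma_1\sigma_0\rangle$ and $H=\langle\sigma_0\rangle$. Then $G=N\rtimes H$ (internal semidirect product, with $N$ normal). Furthermore, if $\alpha=\gcd(n,\,p_0p_1-p_2^2)$, then $$G\cong (C_n\times C_{n/\alpha})\rtimes C_3,$$ where $C_k$ denotes the cyclic group of order $k$.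
   Context: The dessin $D(p_0,p_1,p_2)$ is the bicolored graph on the rational billiards surface of the triangle with angles $(p_0\pi/n,p_1\pi/n,p_2\pi/n)$, with a black vertex in each of the $n$ copies of the triangle having the original orientation, a white vertex in each of the $n$ reflected copies, and an edge for each pair of adjacent triangles. Edges are labeled $(m,i)$, where $m$ indexes the black vertex (the copy rotated by $2m\pi/n$) and $i$ indicates the side $s_i$ (opposite the angle $p_i\pi/n$) through which the edge passes; the monodromy permutations $\sigma_0,\sigma_1$ (counterclockwise rotation of edges around black, resp. white, vertices) act on the edges by the formulas given in the claim. Products of permutations are composed as functions, $(\sigma_0\sigma_1)(e)=\sigma_0(\sigma_1(e))$. *)

theory Defs
  imports "HOL-Algebra.Algebra"
begin

definition dessin_edges :: "nat \<Rightarrow> (int \<times> int) set" where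
  "dessin_edges n = {0..<int n} \<times> {0..<3}"

text \<open>sigma_0: rotation around black vertices (extensional, as required by BijGroup).\<close>
definition dessin_sigma0 :: "nat \<Rightarrow> (int \<times> int \<Rightarrow> int \<times> int)" where
  "dessin_sigma0 n = restrict (\<lambda>(m, i). (m, (i + 1) mod 3)) (dessin_edges n)"

definition dessin_sigma1 :: "nat \<Rightarrow> nat \<Rightarrow> nat \<Rightarrow> nat \<Rightarrow> (int \<times> int \<Rightarrow> int \<times> int)" where
  "dessin_sigma1 n p0 p1 p2 = restrict (\<lambda>(m, i).
      if i = 0 then ((m - int p1) mod int n, 2)
      else if i = 1 then ((m - int p2) mod int n, 0)
      else ((m - int p0) mod int n, 1)) (dessin_edges n)"

definition perm_subgroup :: "'a set \<Rightarrow> ('a \<Rightarrow> 'a) set \<Rightarrow> ('a \<Rightarrow> 'a) monoid" where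
  "perm_subgroup S A = (BijGroup S)\<lparr>carrier := generate (BijGroup S) A\<rparr>"

definition internal_semidirect :: "('a, 'b) monoid_scheme \<Rightarrow> 'a set \<Rightarrow> 'a set \<Rightarrow> bool" where
  "internal_semidirect G N H \<longleftrightarrow>
     N \<lhd> G \<and> subgroup H G \<and> N \<inter> H = {\<one>\<^bsub>G\<^esub>} \<and> N <#>\<^bsub>G\<^esub> H = carrier G"

definition aut_action :: "('a, 'c) monoid_scheme \<Rightarrow> ('b, 'd) monoid_scheme \<Rightarrow> ('b \<Rightarrow> 'a \<Rightarrow> 'a) \<Rightarrow> bool" where
  "aut_action A B \<phi> \<longleftrightarrow>
     (\<forall>b \<in> carrier B. \<phi> b \<in> iso A A) \<and>
     (\<forall>b \<in> carrier B. \<forall>b' \<in> carrier B. \<forall>a \<in> carrier A.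
        \<phi> (b \<otimes>\<^bsub>B\<^esub> b') a = \<phi> b (\<phi> b' a)) \<and>
     (\<forall>a \<in> carrier A. \<phi> \<one>\<^bsub>B\<^esub> a = a)"

definition semidirect_prod :: "('a, 'c) monoid_scheme \<Rightarrow> ('b, 'd) monoid_scheme \<Rightarrow> ('b \<Rightarrow> 'a \<Rightarrow> 'a) \<Rightarrow> ('a \<times> 'b) monoid" where
  "semidirect_prod A B \<phi> =
    \<lparr>carrier = carrier A \<times> carrier B,
     monoid.mult = (\<lambda>(a, b) (a', b'). (a \<otimes>\<^bsub>A\<^esub> \<phi> b a', b \<otimes>\<^bsub>B\<^esub> b')),
     one = (\<one>\<^bsub>A\<^esub>, \<one>\<^bsub>B\<^esub>)\<rparr>"

text \<open>Cyclic group of order k (k > 0).\<close>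
abbreviation cyclic_grp :: "nat \<Rightarrow> int monoid" where
  "cyclic_grp k \<equiv> integer_mod_group k"

end

theory Submission
  imports Defs
begin

lemma aut_actionD:
  assumes "aut_action A B \<phi>"
  shows "\<And>b. b \<in> carrier B \<Longrightarrow> \<phi> b \<in> iso A A"
    and "\<And>b b' a. b \<in> carrier B \<Longrightarrow> b' \<in> carrier B \<Longrightarrow> a \<in> carrier A \<Longrightarrow>
           \<phi> (b \<otimes>\<^bsub>B\<^esub> b') a = \<phi> b (\<phi> b' a)"
    and "\<And>a. a \<in> carrier A \<Longrightarrow> \<phi> \<one>\<^bsub>B\<^esub> a = a"
  using assms unfolding aut_action_def by auto

lemma sdp_carrier[simp]: "carrier (semidirect_prod A B \<phi>) = carrier A \<times> carrier B"
  by (simp add: semidirect_prod_def)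
lemma sdp_one[simp]: "\<one>\<^bsub>semidirect_prod A B \<phi>\<^esub> = (\<one>\<^bsub>A\<^esub>, \<one>\<^bsub>B\<^esub>)"
  by (simp add: semidirect_prod_def)
lemma sdp_mult[simp]: "(a, b) \<otimes>\<^bsub>semidirect_prod A B \<phi>\<^esub> (a', b') = (a \<otimes>\<^bsub>A\<^esub> \<phi> b a', b \<otimes>\<^bsub>B\<^esub> b')"
  by (simp add: semidirect_prod_def)

locale sdp = A: group A + B: group B for A (structure) and B (structure) and \<phi> +
  assumes act: "aut_action A B \<phi>"
begin

lemma phi_closed: "b \<in> carrier B \<Longrightarrow> a \<in> carrier A \<Longrightarrow> \<phi> b a \<in> carrier A"
  using aut_actionD(1)[OF act] unfolding iso_def hom_def by auto

lemma phi_mult: "b \<in> carrier B \<Longrightarrow> a \<in> carrier A \<Longrightarrow> a' \<in> carrier A \<Longrightarrow>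
   \<phi> b (a \<otimes>\<^bsub>A\<^esub> a') = \<phi> b a \<otimes>\<^bsub>A\<^esub> \<phi> b a'"
  using aut_actionD(1)[OF act] unfolding iso_def hom_def by auto

lemma phi_one: "b \<in> carrier B \<Longrightarrow> \<phi> b \<one>\<^bsub>A\<^esub> = \<one>\<^bsub>A\<^esub>"
  using aut_actionD(1)[OF act] hom_one[of "\<phi> b" A A] A.is_group unfolding iso_def by auto

lemma phi_comp: "b \<in> carrier B \<Longrightarrow> b' \<in> carrier B \<Longrightarrow> a \<in> carrier A \<Longrightarrow>
           \<phi> (b \<otimes>\<^bsub>B\<^esub> b') a = \<phi> b (\<phi> b' a)"
  using aut_actionD(2)[OF act] by blast

lemma phi_id: "a \<in> carrier A \<Longrightarrow> \<phi> \<one>\<^bsub>B\<^esub> a = a"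
  using aut_actionD(3)[OF act] by blast

lemma sdp_group: "group (semidirect_prod A B \<phi>)"
proof (rule groupI)
  let ?S = "semidirect_prod A B \<phi>"
  show "x \<otimes>\<^bsub>?S\<^esub> y \<in> carrier ?S" if "x \<in> carrier ?S" "y \<in> carrier ?S" for x y
    using that by (cases x; cases y) (auto simp: phi_closed)
  show "\<one>\<^bsub>?S\<^esub> \<in> carrier ?S" by simp
  show "x \<otimes>\<^bsub>?S\<^esub> y \<otimes>\<^bsub>?S\<^esub> z = x \<otimes>\<^bsub>?S\<^esub> (y \<otimes>\<^bsub>?S\<^esub> z)"
    if "x \<in> carrier ?S" "y \<in> carrier ?S" "z \<in> carrier ?S" for x y z
    using that by (cases x; cases y; cases z)
      (auto simp: phi_closed phi_comp phi_mult A.m_assoc B.m_assoc)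
  show "\<one>\<^bsub>?S\<^esub> \<otimes>\<^bsub>?S\<^esub> x = x" if "x \<in> carrier ?S" for x
    using that by (cases x) (auto simp: phi_id)
  show "\<exists>y\<in>carrier ?S. y \<otimes>\<^bsub>?S\<^esub> x = \<one>\<^bsub>?S\<^esub>" if "x \<in> carrier ?S" for x
  proof (cases x)
    case (Pair a b)
    with that have ab: "a \<in> carrier A" "b \<in> carrier B" by auto
    show ?thesis
      by (rule bexI[of _ "(\<phi> (inv\<^bsub>B\<^esub> b) (inv\<^bsub>A\<^esub> a), inv\<^bsub>B\<^esub> b)"])
        (use ab Pair in \<open>auto simp: phi_closed phi_mult[symmetric] phi_one\<close>)
  qed
qed

lemma sdp_inv:
  assumes "a \<in> carrier A" "b \<in> carrier B"
  shows "inv\<^bsub>semidirect_prod A B \<phi>\<^esub> (a, b) = (\<phi> (inv\<^bsub>B\<^esub> b) (inv\<^bsub>A\<^esub> a), inv\<^bsub>B\<^esub> b)"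
  by (rule group.inv_equality[OF sdp_group])
    (use assms in \<open>auto simp: phi_closed phi_mult[symmetric] phi_one\<close>)

lemma sdp_subN: "subgroup (carrier A \<times> {\<one>\<^bsub>B\<^esub>}) (semidirect_prod A B \<phi>)"
proof -
  let ?S = "semidirect_prod A B \<phi>"
  let ?N = "carrier A \<times> {\<one>\<^bsub>B\<^esub>}"
  interpret S: group ?S by (rule sdp_group)
  show ?thesis
  proof (rule S.subgroupI)
    show "?N \<subseteq> carrier ?S" by auto
    show "?N \<noteq> {}" by auto
    show "inv\<^bsub>?S\<^esub> x \<in> ?N" if "x \<in> ?N" for x
      using that by (auto simp: sdp_inv phi_id)
    show "x \<otimes>\<^bsub>?S\<^esub> y \<in> ?N" if "x \<in> ?N" "y \<in> ?N" for x y
      using that by (auto simp: phi_id)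
  qed
qed

lemma sdp_subH: "subgroup ({\<one>\<^bsub>A\<^esub>} \<times> carrier B) (semidirect_prod A B \<phi>)"
proof -
  let ?S = "semidirect_prod A B \<phi>"
  let ?H = "{\<one>\<^bsub>A\<^esub>} \<times> carrier B"
  interpret S: group ?S by (rule sdp_group)
  show ?thesis
  proof (rule S.subgroupI)
    show "?H \<subseteq> carrier ?S" by auto
    show "?H \<noteq> {}" by auto
    show "inv\<^bsub>?S\<^esub> x \<in> ?H" if "x \<in> ?H" for x
      using that by (auto simp: sdp_inv phi_one)
    show "x \<otimes>\<^bsub>?S\<^esub> y \<in> ?H" if "x \<in> ?H" "y \<in> ?H" for x y
      using that by (auto simp: phi_one)
  qed
qed

lemma transfer:
  assumes G: "group G" and iso: "\<Phi> \<in> iso (semidirect_prod A B \<phi>) G"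
  shows "internal_semidirect G (\<Phi> ` (carrier A \<times> {\<one>\<^bsub>B\<^esub>})) (\<Phi> ` ({\<one>\<^bsub>A\<^esub>} \<times> carrier B))"
proof -
  let ?S = "semidirect_prod A B \<phi>"
  let ?N = "carrier A \<times> {\<one>\<^bsub>B\<^esub>}" and ?H = "{\<one>\<^bsub>A\<^esub>} \<times> carrier B"
  interpret S: group ?S by (rule sdp_group)
  interpret GG: group G by (rule G)
  have hom: "\<Phi> \<in> hom ?S G" using iso by (simp add: iso_def)
  interpret gh: group_hom ?S G \<Phi>
    by (simp add: group_hom_def group_hom_axioms_def hom G S.is_group)
  have surj: "\<Phi> ` carrier ?S = carrier G" and inj: "inj_on \<Phi> (carrier ?S)"
    using iso by (auto simp: iso_iff)
  have subN: "subgroup ?N ?S" by (rule sdp_subN)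
  have subH: "subgroup ?H ?S" by (rule sdp_subH)
  have normN: "\<Phi> ` ?N \<lhd> G"
    unfolding GG.normal_inv_iff
  proof (intro conjI ballI)
    show "subgroup (\<Phi> ` ?N) G" by (rule gh.subgroup_img_is_subgroup[OF subN])
    fix g h assume g: "g \<in> carrier G" and h: "h \<in> \<Phi> ` ?N"
    have "g \<in> \<Phi> ` carrier ?S" using g surj by simp
    then obtain x where x: "x \<in> carrier ?S" "g = \<Phi> x" by blast
    from h obtain y where y: "y \<in> ?N" "h = \<Phi> y" by auto
    obtain a b where xab: "x = (a, b)" by fastforce
    obtain a' where ya: "y = (a', \<one>\<^bsub>B\<^esub>)" "a' \<in> carrier A" using y by auto
    have ab: "a \<in> carrier A" "b \<in> carrier B" using x xab by auto
    have yS: "y \<in> carrier ?S" using ya by auto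
    have "g \<otimes>\<^bsub>G\<^esub> h \<otimes>\<^bsub>G\<^esub> inv\<^bsub>G\<^esub> g = \<Phi> (x \<otimes>\<^bsub>?S\<^esub> y \<otimes>\<^bsub>?S\<^esub> inv\<^bsub>?S\<^esub> x)"
    proof -
      have xy: "x \<otimes>\<^bsub>?S\<^esub> y \<in> carrier ?S" by (rule S.m_closed[OF x(1) yS])
      have ix: "inv\<^bsub>?S\<^esub> x \<in> carrier ?S" by (rule S.inv_closed[OF x(1)])
      have "\<Phi> (x \<otimes>\<^bsub>?S\<^esub> y \<otimes>\<^bsub>?S\<^esub> inv\<^bsub>?S\<^esub> x) = \<Phi> (x \<otimes>\<^bsub>?S\<^esub> y) \<otimes>\<^bsub>G\<^esub> \<Phi> (inv\<^bsub>?S\<^esub> x)"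
        by (rule gh.hom_mult[OF xy ix])
      also have "\<dots> = \<Phi> x \<otimes>\<^bsub>G\<^esub> \<Phi> y \<otimes>\<^bsub>G\<^esub> inv\<^bsub>G\<^esub> (\<Phi> x)"
        using gh.hom_mult[OF x(1) yS] gh.hom_inv[OF x(1)] by simp
      finally show ?thesis using x y by simp
    qed
    moreover have "x \<otimes>\<^bsub>?S\<^esub> y \<otimes>\<^bsub>?S\<^esub> inv\<^bsub>?S\<^esub> x \<in> ?N"
      using ab ya xab by (auto simp: sdp_inv phi_closed phi_id)
    ultimately show "g \<otimes>\<^bsub>G\<^esub> h \<otimes>\<^bsub>G\<^esub> inv\<^bsub>G\<^esub> g \<in> \<Phi> ` ?N" by simp
  qed
  have subH': "subgroup (\<Phi> ` ?H) G" by (rule gh.subgroup_img_is_subgroup[OF subH])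
  have "\<Phi> ` ?N \<inter> \<Phi> ` ?H = \<Phi> ` (?N \<inter> ?H)"
    by (rule inj_on_image_Int[OF inj, symmetric]) auto
  also have "?N \<inter> ?H = {\<one>\<^bsub>?S\<^esub>}" by auto
  finally have int: "\<Phi> ` ?N \<inter> \<Phi> ` ?H = {\<one>\<^bsub>G\<^esub>}" using gh.hom_one by simp
  have prod: "\<Phi> ` ?N <#>\<^bsub>G\<^esub> \<Phi> ` ?H = carrier G"
  proof
    show "\<Phi> ` ?N <#>\<^bsub>G\<^esub> \<Phi> ` ?H \<subseteq> carrier G"
      unfolding set_mult_def by auto
    show "carrier G \<subseteq> \<Phi> ` ?N <#>\<^bsub>G\<^esub> \<Phi> ` ?H"
    proof
      fix g assume "g \<in> carrier G"
      then have "g \<in> \<Phi> ` carrier ?S" using surj by simp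
      then obtain x where "x \<in> carrier ?S" "g = \<Phi> x" by blast
      then obtain a b where ab: "a \<in> carrier A" "b \<in> carrier B" "g = \<Phi> (a, b)" by (cases x) auto
      have "(a, b) = (a, \<one>\<^bsub>B\<^esub>) \<otimes>\<^bsub>?S\<^esub> (\<one>\<^bsub>A\<^esub>, b)"
        using ab by (simp add: phi_id)
      then have "g = \<Phi> (a, \<one>\<^bsub>B\<^esub>) \<otimes>\<^bsub>G\<^esub> \<Phi> (\<one>\<^bsub>A\<^esub>, b)"
        using ab gh.hom_mult[of "(a, \<one>\<^bsub>B\<^esub>)" "(\<one>\<^bsub>A\<^esub>, b)"] by simp
      then show "g \<in> \<Phi> ` ?N <#>\<^bsub>G\<^esub> \<Phi> ` ?H"
        unfolding set_mult_def using ab by blast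
    qed
  qed
  show ?thesis unfolding internal_semidirect_def
    using normN subH' int prod by blast
qed

end


definition Ed :: "int \<Rightarrow> (int \<times> int) set" where
  "Ed N = {0..<N} \<times> {0..<3}"

definition pm :: "int \<Rightarrow> (int \<Rightarrow> int) \<Rightarrow> int \<Rightarrow> (int \<times> int \<Rightarrow> int \<times> int)" where
  "pm N x k = restrict (\<lambda>(m, i). ((m + x i) mod N, (i + k) mod 3)) (Ed N)"

lemma pm_app: "0 \<le> m \<Longrightarrow> m < N \<Longrightarrow> 0 \<le> i \<Longrightarrow> i < 3 \<Longrightarrow>
   pm N x k (m, i) = ((m + x i) mod N, (i + k) mod 3)"
  by (simp add: pm_def Ed_def)

lemma pm_in: "N > 0 \<Longrightarrow> z \<in> Ed N \<Longrightarrow> pm N x k z \<in> Ed N"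
  by (auto simp: pm_def Ed_def)

lemma pm_inj: assumes "N > 0" shows "inj_on (pm N x k) (Ed N)"
proof (rule inj_onI)
  fix z z' assume z: "z \<in> Ed N" and z': "z' \<in> Ed N" and eq: "pm N x k z = pm N x k z'"
  obtain m i where zz: "z = (m, i)" by fastforce
  obtain m' i' where zz': "z' = (m', i')" by fastforce
  have r: "0 \<le> m" "m < N" "0 \<le> i" "i < 3" "0 \<le> m'" "m' < N" "0 \<le> i'" "i' < 3"
    using z z' zz zz' by (auto simp: Ed_def)
  have e1: "(m + x i) mod N = (m' + x i') mod N" and e2: "(i + k) mod 3 = (i' + k) mod 3"
    using eq r zz zz' by (auto simp: pm_app)
  from e2 have "(3::int) dvd i - i'" by (simp add: mod_eq_dvd_iff)
  with r have ii: "i = i'" by presburger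
  with e1 have "N dvd m - m'" by (simp add: mod_eq_dvd_iff)
  then have "m mod N = m' mod N" by (simp add: mod_eq_dvd_iff)
  with r have "m = m'" by simp
  with ii zz zz' show "z = z'" by simp
qed

lemma pm_Bij: assumes "N > 0" shows "pm N x k \<in> Bij (Ed N)"
proof -
  have fin: "finite (Ed N)" by (simp add: Ed_def)
  have sub: "pm N x k ` Ed N \<subseteq> Ed N" using pm_in[OF assms] by auto
  have "pm N x k ` Ed N = Ed N"
    by (rule endo_inj_surj[OF fin sub pm_inj[OF assms]])
  then have "bij_betw (pm N x k) (Ed N) (Ed N)"
    using pm_inj[OF assms] by (simp add: bij_betw_def)
  moreover have "pm N x k \<in> extensional (Ed N)" by (simp add: pm_def)
  ultimately show ?thesis by (simp add: Bij_def)
qed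

lemma pm_mult: assumes "N > 0"
  shows "pm N x k \<otimes>\<^bsub>BijGroup (Ed N)\<^esub> pm N y l = pm N (\<lambda>i. y i + x ((i + l) mod 3)) (k + l)"
proof -
  have "pm N x k \<otimes>\<^bsub>BijGroup (Ed N)\<^esub> pm N y l = compose (Ed N) (pm N x k) (pm N y l)"
    using pm_Bij[OF assms] by (simp add: BijGroup_def)
  also have "\<dots> = pm N (\<lambda>i. y i + x ((i + l) mod 3)) (k + l)"
  proof (rule ext)
    fix z show "compose (Ed N) (pm N x k) (pm N y l) z = pm N (\<lambda>i. y i + x ((i + l) mod 3)) (k + l) z"
    proof (cases "z \<in> Ed N")
      case True
      then obtain m i where zz: "z = (m, i)" and r: "0 \<le> m" "m < N" "0 \<le> i" "i < 3"
        by (auto simp: Ed_def)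
      have r2: "0 \<le> (m + y i) mod N" "(m + y i) mod N < N" "0 \<le> (i + l) mod 3" "(i + l) mod 3 < 3"
        using assms by auto
      show ?thesis using True
        by (simp add: compose_def zz pm_app[OF r] pm_app[OF r2] mod_simps add.assoc add.commute add.left_commute)
    next
      case False
      then show ?thesis by (simp add: compose_def pm_def)
    qed
  qed
  finally show ?thesis .
qed

lemma pm_eq:
  assumes "\<And>i. i \<in> {0, 1, 2} \<Longrightarrow> x i mod N = y i mod N" and "k mod 3 = l mod 3"
  shows "pm N x k = pm N y l"
proof (rule ext)
  fix z show "pm N x k z = pm N y l z"
  proof (cases "z \<in> Ed N")
    case True
    then obtain m i where zz: "z = (m, i)" and r: "0 \<le> m" "m < N" "0 \<le> i" "i < 3"
      by (auto simp: Ed_def)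
    have "i \<in> {0, 1, 2}" using r by auto
    then have "x i mod N = y i mod N" by (rule assms(1))
    then have "(m + x i) mod N = (m + y i) mod N" by (metis mod_add_right_eq)
    moreover have "(i + k) mod 3 = (i + l) mod 3" using assms(2) by (metis mod_add_right_eq)
    ultimately show ?thesis by (simp add: zz pm_app[OF r])
  next
    case False
    then show ?thesis by (simp add: pm_def)
  qed
qed

lemma pm_one: assumes "N > 0" shows "\<one>\<^bsub>BijGroup (Ed N)\<^esub> = pm N (\<lambda>i. 0) 0"
proof (rule ext)
  fix z show "\<one>\<^bsub>BijGroup (Ed N)\<^esub> z = pm N (\<lambda>i. 0) 0 z"
    by (cases "z \<in> Ed N") (auto simp: BijGroup_def pm_def Ed_def)
qed


locale dz =
  fixes p0 p1 p2 :: int and n q :: nat and \<alpha> c :: int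
  assumes pos: "p0 > 0" "p1 > 0" "p2 > 0"
    and g1: "gcd p0 (gcd p1 p2) = 1"
    and nsum: "int n = p0 + p1 + p2"
    and alpha: "\<alpha> = gcd (int n) (p0 * p1 - p2^2)"
    and nq: "int n = \<alpha> * int q"
    and c0: "\<alpha> dvd p2 - c * p1" and c1: "\<alpha> dvd p0 - c * p2" and c2: "\<alpha> dvd p1 - c * p0"
begin

abbreviation "N \<equiv> int n"

definition v1 :: "int \<Rightarrow> int" where "v1 j = (if j = 0 then p1 else if j = 1 then p2 else p0)"
definition v2 :: "int \<Rightarrow> int" where "v2 j = (if j = 0 then p2 else if j = 1 then p0 else p1)"
definition w :: "int \<Rightarrow> int" where "w j = v2 j - c * v1 j"
definition vec :: "int \<times> int \<Rightarrow> int \<Rightarrow> int" where "vec u j = fst u * v1 j + snd u * w j"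

definition fmap :: "int \<times> int \<Rightarrow> int \<times> int" where
  "fmap u = ((- (1 + c) * fst u + (1 + c + c^2) * snd u) mod N, (- fst u + c * snd u) mod int q)"

lemma N_pos: "N > 0" using pos nsum by simp
lemma n_pos: "n > 0" using N_pos by simp
lemma alpha_pos: "\<alpha> > 0" using alpha n_pos by simp
lemma q_pos: "int q > 0" using nq N_pos alpha_pos by (metis zero_less_mult_pos)

lemma w_dvd: "j \<in> {0, 1, 2} \<Longrightarrow> \<alpha> dvd w j"
  using c0 c1 c2 by (auto simp: w_def v1_def v2_def)

lemma qw: "j \<in> {0, 1, 2} \<Longrightarrow> int q * w j = N * (w j div \<alpha>)"
  using w_dvd[of j] nq by (auto elim!: dvdE)

lemma vec_shift: "j \<in> {0, 1, 2} \<Longrightarrow>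
  vec (a, b) ((j + 2) mod 3) = (a - b * c) * N
     + (- (1 + c) * a + (1 + c + c^2) * b) * v1 j + (- a + c * b) * w j"
  by (auto simp: vec_def v1_def v2_def w_def nsum algebra_simps power2_eq_square)

lemma vec_f: assumes j: "j \<in> {0, 1, 2}"
  shows "vec (fmap (a, b)) j mod N = vec (a, b) ((j + 2) mod 3) mod N"
proof -
  define XX where "XX = - (1 + c) * a + (1 + c + c^2) * b"
  define YY where "YY = - a + c * b"
  have "vec (fmap (a, b)) j = (XX mod N) * v1 j + (YY mod int q) * w j"
    by (simp add: fmap_def vec_def XX_def YY_def)
  also have "\<dots> = (XX - N * (XX div N)) * v1 j + (YY - int q * (YY div int q)) * w j"
    by (simp add: minus_div_mult_eq_mod[symmetric] mult.commute)
  also have "\<dots> = XX * v1 j + YY * w j - N * ((XX div N) * v1 j) - (YY div int q) * (int q * w j)"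
    by (simp add: algebra_simps)
  also have "\<dots> = XX * v1 j + YY * w j - N * ((XX div N) * v1 j) - N * ((YY div int q) * (w j div \<alpha>))"
    using qw[OF j] by simp
  finally have e1: "vec (fmap (a, b)) j = XX * v1 j + YY * w j - N * ((XX div N) * v1 j + (YY div int q) * (w j div \<alpha>))"
    by (simp add: algebra_simps)
  have e2: "vec (a, b) ((j + 2) mod 3) = (a - b * c) * N + XX * v1 j + YY * w j"
    using vec_shift[OF j] by (simp add: XX_def YY_def)
  have "vec (fmap (a, b)) j - vec (a, b) ((j + 2) mod 3) = N * (- ((XX div N) * v1 j + (YY div int q) * (w j div \<alpha>)) - (a - b * c))"
    unfolding e1 e2 by (simp add: algebra_simps)
  then show ?thesis by (simp add: mod_eq_dvd_iff)
qed

lemma vec_add: assumes j: "j \<in> {0, 1, 2}"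
  shows "vec ((a + a') mod N, (b + b') mod int q) j mod N = (vec (a, b) j + vec (a', b') j) mod N"
proof -
  have "vec ((a + a') mod N, (b + b') mod int q) j
     = (a + a' - N * ((a + a') div N)) * v1 j + (b + b' - int q * ((b + b') div int q)) * w j"
    by (simp add: vec_def minus_div_mult_eq_mod[symmetric] mult.commute)
  also have "\<dots> = (a + a') * v1 j + (b + b') * w j - N * (((a + a') div N) * v1 j) - ((b + b') div int q) * (int q * w j)"
    by (simp add: algebra_simps)
  also have "\<dots> = (vec (a, b) j + vec (a', b') j) - N * (((a + a') div N) * v1 j + ((b + b') div int q) * (w j div \<alpha>))"
    using qw[OF j] by (simp add: vec_def algebra_simps)
  finally show ?thesis by (simp add: mod_eq_dvd_iff)
qed

lemma vec_lin: "vec (a, b) j = (a - b * c) * v1 j + b * v2 j"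
  by (simp add: vec_def w_def algebra_simps)

lemma key_inj:
  assumes d: "\<And>j. j \<in> {0, 1, 2} \<Longrightarrow> N dvd da * v1 j + db * w j"
    and ba: "\<bar>db\<bar> < int q" and aa: "\<bar>da\<bar> < N"
  shows "da = 0 \<and> db = 0"
proof -
  define e where "e = db * c - da"
  have d': "N dvd db * v2 j - e * v1 j" if "j \<in> {0, 1, 2}" for j
  proof -
    have "da * v1 j + db * w j = db * v2 j - e * v1 j" by (simp add: e_def w_def algebra_simps)
    then show ?thesis using d[OF that] by simp
  qed
  have h0: "N dvd db * p2 - e * p1" using d'[of 0] by (simp add: v1_def v2_def)
  have h1: "N dvd db * p0 - e * p2" using d'[of 1] by (simp add: v1_def v2_def)
  have h2: "N dvd db * p1 - e * p0" using d'[of 2] by (simp add: v1_def v2_def)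
  have "db * (p0 * p1 - p2^2) = p1 * (db * p0 - e * p2) - p2 * (db * p2 - e * p1)"
    by (simp add: algebra_simps power2_eq_square)
  then have "N dvd db * (p0 * p1 - p2^2)" using h0 h1 by (simp add: dvd_diff dvd_mult)
  moreover have "N dvd db * N" by simp
  ultimately have "N dvd gcd (db * N) (db * (p0 * p1 - p2^2))" by simp
  also have "gcd (db * N) (db * (p0 * p1 - p2^2)) = \<bar>db\<bar> * \<alpha>"
    by (simp add: gcd_mult_left alpha abs_mult)
  finally have "\<alpha> * int q dvd \<bar>db\<bar> * \<alpha>" using nq by simp
  then have "int q dvd \<bar>db\<bar>" using alpha_pos by (simp add: mult.commute)
  then have db0: "db = 0" using ba q_pos
    by (metis abs_ge_zero abs_eq_0 zdvd_not_zless order_le_less)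
  then have "N dvd e * p1" "N dvd e * p2" "N dvd e * p0" using h0 h1 h2 by simp_all
  then have "N dvd gcd (e * p0) (gcd (e * p1) (e * p2))" by simp
  also have "gcd (e * p0) (gcd (e * p1) (e * p2)) = \<bar>e\<bar>"
    by (simp add: gcd_mult_left g1)
  finally have "N dvd \<bar>e\<bar>" .
  moreover have "\<bar>e\<bar> < N" using aa db0 e_def by simp
  ultimately have "e = 0"
    by (metis abs_ge_zero abs_eq_0 zdvd_not_zless order_le_less)
  with db0 e_def show ?thesis by simp
qed

abbreviation "AA \<equiv> cyclic_grp n \<times>\<times> cyclic_grp q"
abbreviation "BB \<equiv> cyclic_grp 3"

definition phi :: "int \<Rightarrow> int \<times> int \<Rightarrow> int \<times> int" where
  "phi k u = (fmap ^^ nat k) u"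

lemma carrier_n[simp]: "carrier (cyclic_grp n) = {0..<N}"
  using n_pos by (simp add: carrier_integer_mod_group)

lemma carrier_q[simp]: "carrier (cyclic_grp q) = {0..<int q}"
  using q_pos by (simp add: carrier_integer_mod_group)

lemma carrierAA: "carrier AA = {0..<N} \<times> {0..<int q}"
  by simp

lemma carrierBB: "carrier BB = {0..<3}"
  by (simp add: carrier_integer_mod_group)

lemma vec_f': "j \<in> {0, 1, 2} \<Longrightarrow> vec (fmap u) j mod N = vec u ((j + 2) mod 3) mod N"
  using vec_f[of j "fst u" "snd u"] by simp

lemma vec_f2: "j \<in> {0, 1, 2} \<Longrightarrow> vec (fmap (fmap u)) j mod N = vec u ((j + 1) mod 3) mod N"
proof -
  assume j: "j \<in> {0, 1, 2}"
  have j2: "(j + 2) mod 3 \<in> {0, 1, 2}" by auto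
  have "vec (fmap (fmap u)) j mod N = vec (fmap u) ((j + 2) mod 3) mod N" by (rule vec_f'[OF j])
  also have "\<dots> = vec u (((j + 2) mod 3 + 2) mod 3) mod N" by (rule vec_f'[OF j2])
  also have "((j + 2) mod 3 + 2) mod 3 = (j + 1) mod 3" using j by auto
  finally show ?thesis .
qed

lemma vec_f3: "j \<in> {0, 1, 2} \<Longrightarrow> vec (fmap (fmap (fmap u))) j mod N = vec u j mod N"
proof -
  assume j: "j \<in> {0, 1, 2}"
  have j2: "(j + 2) mod 3 \<in> {0, 1, 2}" by auto
  have "vec (fmap (fmap (fmap u))) j mod N = vec (fmap (fmap u)) ((j + 2) mod 3) mod N" by (rule vec_f'[OF j])
  also have "\<dots> = vec u (((j + 2) mod 3 + 1) mod 3) mod N" by (rule vec_f2[OF j2])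
  also have "((j + 2) mod 3 + 1) mod 3 = j" using j by auto
  finally show ?thesis .
qed

lemma vec_inj:
  assumes u: "u \<in> carrier AA" and u': "u' \<in> carrier AA"
    and eq: "\<And>j. j \<in> {0, 1, 2} \<Longrightarrow> vec u j mod N = vec u' j mod N"
  shows "u = u'"
proof -
  obtain a b where ab: "u = (a, b)" by fastforce
  obtain a' b' where ab': "u' = (a', b')" by fastforce
  have r: "0 \<le> a" "a < N" "0 \<le> b" "b < int q" "0 \<le> a'" "a' < N" "0 \<le> b'" "b' < int q"
    using u u' ab ab' by (auto simp: carrierAA)
  have "(a - a') = 0 \<and> (b - b') = 0"
  proof (rule key_inj)
    fix j :: int assume j: "j \<in> {0, 1, 2}"
    have "N dvd vec u j - vec u' j" using eq[OF j] by (simp add: mod_eq_dvd_iff)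
    moreover have "vec u j - vec u' j = (a - a') * v1 j + (b - b') * w j"
      by (simp add: ab ab' vec_def algebra_simps)
    ultimately show "N dvd (a - a') * v1 j + (b - b') * w j" by simp
  next
    show "\<bar>b - b'\<bar> < int q" using r by auto
    show "\<bar>a - a'\<bar> < N" using r by auto
  qed
  then show ?thesis using ab ab' by simp
qed

lemma fmap_closed: "fmap u \<in> carrier AA"
  using n_pos q_pos by (simp add: carrierAA fmap_def)

lemma fmap3: "u \<in> carrier AA \<Longrightarrow> fmap (fmap (fmap u)) = u"
  by (rule vec_inj[OF fmap_closed]) (auto simp: vec_f3)

lemma multAA: "u \<otimes>\<^bsub>AA\<^esub> u' = ((fst u + fst u') mod N, (snd u + snd u') mod int q)"
  by (simp add: mult_DirProd')

lemma multAA_closed: "u \<in> carrier AA \<Longrightarrow> u' \<in> carrier AA \<Longrightarrow> u \<otimes>\<^bsub>AA\<^esub> u' \<in> carrier AA"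
  using n_pos q_pos by (simp add: multAA carrierAA)

lemma vec_mult: "j \<in> {0, 1, 2} \<Longrightarrow> vec (u \<otimes>\<^bsub>AA\<^esub> u') j mod N = (vec u j + vec u' j) mod N"
  using vec_add[of j "fst u" "fst u'" "snd u" "snd u'"] by (simp add: multAA)

lemma fmap_hom: "u \<in> carrier AA \<Longrightarrow> u' \<in> carrier AA \<Longrightarrow> fmap (u \<otimes>\<^bsub>AA\<^esub> u') = fmap u \<otimes>\<^bsub>AA\<^esub> fmap u'"
proof (rule vec_inj[OF fmap_closed multAA_closed[OF fmap_closed fmap_closed]])
  fix j :: int assume j: "j \<in> {0, 1, 2}"
  have j2: "(j + 2) mod 3 \<in> {0, 1, 2}" by auto
  have "vec (fmap (u \<otimes>\<^bsub>AA\<^esub> u')) j mod N = vec (u \<otimes>\<^bsub>AA\<^esub> u') ((j + 2) mod 3) mod N" by (rule vec_f'[OF j])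
  also have "\<dots> = (vec u ((j + 2) mod 3) + vec u' ((j + 2) mod 3)) mod N" by (rule vec_mult[OF j2])
  also have "\<dots> = (vec (fmap u) j + vec (fmap u') j) mod N"
    using vec_f'[OF j, of u] vec_f'[OF j, of u'] by (metis mod_add_cong)
  also have "\<dots> = vec (fmap u \<otimes>\<^bsub>AA\<^esub> fmap u') j mod N" by (rule vec_mult[OF j, symmetric])
  finally show "vec (fmap (u \<otimes>\<^bsub>AA\<^esub> u')) j mod N = vec (fmap u \<otimes>\<^bsub>AA\<^esub> fmap u') j mod N" .
qed

lemma fmap_iso: "fmap \<in> iso AA AA"
proof (rule isoI)
  show "fmap \<in> hom AA AA" unfolding hom_def using fmap_closed fmap_hom by auto
  show "bij_betw fmap (carrier AA) (carrier AA)"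
  proof -
    have h1: "\<forall>a\<in>carrier AA. (\<lambda>u. fmap (fmap u)) (fmap a) = a" using fmap3 by blast
    have h2: "\<forall>a\<in>carrier AA. fmap ((\<lambda>u. fmap (fmap u)) a) = a" using fmap3 by blast
    have h3: "fmap ` carrier AA \<subseteq> carrier AA" using fmap_closed by blast
    have h4: "(\<lambda>u. fmap (fmap u)) ` carrier AA \<subseteq> carrier AA" using fmap_closed by blast
    show ?thesis by (rule bij_betw_byWitness[OF h1 h2 h3 h4])
  qed
qed

lemma phi0[simp]: "phi 0 u = u" by (simp add: phi_def)
lemma phi1[simp]: "phi 1 u = fmap u" by (simp add: phi_def)
lemma phi2[simp]: "phi 2 u = fmap (fmap u)" by (simp add: phi_def numeral_2_eq_2)

lemma phi_iso: "k \<in> {0, 1, 2} \<Longrightarrow> phi k \<in> iso AA AA"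
proof -
  assume k: "k \<in> {0, 1, 2}"
  have f0: "phi 0 = id" by (auto simp: fun_eq_iff)
  have f1: "phi 1 = fmap" by (auto simp: fun_eq_iff)
  have f2: "phi 2 = fmap \<circ> fmap" by (auto simp: fun_eq_iff)
  show ?thesis using k f0 f1 f2 id_iso fmap_iso iso_set_trans[OF fmap_iso fmap_iso] by auto
qed

lemma aut: "aut_action AA BB phi"
  unfolding aut_action_def
proof (intro conjI ballI)
  fix b assume "b \<in> carrier BB"
  then have "b \<in> {0, 1, 2}" by (auto simp: carrierBB)
  then show "phi b \<in> iso AA AA" by (rule phi_iso)
next
  fix b b' a assume b: "b \<in> carrier BB" and b': "b' \<in> carrier BB" and a: "a \<in> carrier AA"
  have "b \<in> {0, 1, 2}" "b' \<in> {0, 1, 2}" using b b' by (auto simp: carrierBB)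
  then show "phi (b \<otimes>\<^bsub>BB\<^esub> b') a = phi b (phi b' a)"
    using a by (auto simp: fmap3)
next
  fix a assume "a \<in> carrier AA"
  then show "phi \<one>\<^bsub>BB\<^esub> a = a" by simp
qed

lemma vec_phi: "k \<in> {0, 1, 2} \<Longrightarrow> i \<in> {0, 1, 2} \<Longrightarrow> vec (phi k u) ((i + k) mod 3) mod N = vec u i mod N"
proof -
  assume k: "k \<in> {0, 1, 2}" and i: "i \<in> {0, 1, 2}"
  have ik: "(i + k) mod 3 \<in> {0, 1, 2}" by auto
  consider "k = 0" | "k = 1" | "k = 2" using k by auto
  then show ?thesis
  proof cases
    case 1 then show ?thesis using i by auto
  next
    case 2
    have "vec (fmap u) ((i + 1) mod 3) mod N = vec u (((i + 1) mod 3 + 2) mod 3) mod N"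
      using vec_f'[OF ik[unfolded 2]] .
    also have "((i + 1) mod 3 + 2) mod 3 = i" using i by auto
    finally show ?thesis using 2 by simp
  next
    case 3
    have "vec (fmap (fmap u)) ((i + 2) mod 3) mod N = vec u (((i + 2) mod 3 + 1) mod 3) mod N"
      using vec_f2[OF ik[unfolded 3]] .
    also have "((i + 2) mod 3 + 1) mod 3 = i" using i by auto
    finally show ?thesis using 3 by simp
  qed
qed


abbreviation "SS \<equiv> semidirect_prod AA BB phi"
abbreviation "PP \<equiv> BijGroup (Ed N)"

definition Phi :: "(int \<times> int) \<times> int \<Rightarrow> (int \<times> int \<Rightarrow> int \<times> int)" where
  "Phi x = pm N (\<lambda>i. vec (fst x) ((i + snd x) mod 3)) (snd x)"

lemma sdp_inst: "sdp AA BB phi"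
  unfolding sdp_def sdp_axioms_def
  by (simp add: DirProd_group aut)

lemma groupSS: "group SS" by (rule sdp.sdp_group[OF sdp_inst])
lemma groupPP: "group PP" by (rule group_BijGroup)

lemma Phi_closed: "Phi x \<in> carrier PP"
  unfolding Phi_def using pm_Bij[OF N_pos] by (simp add: BijGroup_def)

lemma Phi_mult:
  assumes x: "x \<in> carrier SS" and y: "y \<in> carrier SS"
  shows "Phi (x \<otimes>\<^bsub>SS\<^esub> y) = Phi x \<otimes>\<^bsub>PP\<^esub> Phi y"
proof -
  obtain u k where xx: "x = (u, k)" by fastforce
  obtain u' k' where yy: "y = (u', k')" by fastforce
  have k: "k \<in> {0, 1, 2}" "k' \<in> {0, 1, 2}" using x y xx yy by (auto simp: carrierBB)
  have xy: "x \<otimes>\<^bsub>SS\<^esub> y = (u \<otimes>\<^bsub>AA\<^esub> phi k u', (k + k') mod 3)"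
    by (simp add: xx yy)
  have "Phi x \<otimes>\<^bsub>PP\<^esub> Phi y = pm N (\<lambda>i. vec u' ((i + k') mod 3) + vec u (((i + k') mod 3 + k) mod 3)) (k + k')"
    by (simp add: Phi_def xx yy pm_mult[OF N_pos])
  also have "\<dots> = Phi (x \<otimes>\<^bsub>SS\<^esub> y)"
    unfolding xy Phi_def fst_conv snd_conv
  proof (rule pm_eq)
    fix i :: int assume i: "i \<in> {0, 1, 2}"
    define i' where "i' = (i + k') mod 3"
    have i': "i' \<in> {0, 1, 2}" unfolding i'_def by auto
    have jj: "(i + (k + k') mod 3) mod 3 = (i' + k) mod 3"
      unfolding i'_def by (simp add: mod_simps ac_simps)
    have j3: "(i' + k) mod 3 \<in> {0, 1, 2}" by auto
    have "vec (u \<otimes>\<^bsub>AA\<^esub> phi k u') ((i + (k + k') mod 3) mod 3) mod N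
        = (vec u ((i' + k) mod 3) + vec (phi k u') ((i' + k) mod 3)) mod N"
      unfolding jj by (rule vec_mult[OF j3])
    also have "\<dots> = (vec u ((i' + k) mod 3) + vec u' i') mod N"
      using vec_phi[OF k(1) i', of u'] by (metis mod_add_right_eq)
    finally show "(vec u' ((i + k') mod 3) + vec u (((i + k') mod 3 + k) mod 3)) mod N =
         vec (u \<otimes>\<^bsub>AA\<^esub> phi k u') ((i + (k + k') mod 3) mod 3) mod N"
      unfolding i'_def by (simp add: ac_simps)
  next
    show "(k + k') mod 3 = (k + k') mod 3 mod 3" by simp
  qed
  finally show ?thesis by simp
qed

lemma Phi_hom: "Phi \<in> hom SS PP"
  unfolding hom_def using Phi_closed Phi_mult by auto

lemma Phi_grouphom: "group_hom SS PP Phi"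
  by (simp add: group_hom_def group_hom_axioms_def groupSS groupPP Phi_hom)

lemma Phi_app: "i \<in> {0, 1, 2} \<Longrightarrow> Phi (u, k) (0, i) = (vec u ((i + k) mod 3) mod N, (i + k) mod 3)"
  using N_pos by (auto simp: Phi_def pm_app)

lemma Phi_inj: "inj_on Phi (carrier SS)"
proof (rule inj_onI)
  fix x y assume x: "x \<in> carrier SS" and y: "y \<in> carrier SS" and eq: "Phi x = Phi y"
  obtain u k where xx: "x = (u, k)" by fastforce
  obtain u' k' where yy: "y = (u', k')" by fastforce
  have k: "0 \<le> k" "k < 3" "0 \<le> k'" "k' < 3" using x y xx yy by (auto simp: carrierBB)
  have u: "u \<in> carrier AA" "u' \<in> carrier AA" using x y xx yy by auto
  have "Phi (u, k) (0, 0) = Phi (u', k') (0, 0)" using eq xx yy by simp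
  then have "k mod 3 = k' mod 3" by (simp add: Phi_app)
  then have kk: "k = k'" using k by simp
  have "u = u'"
  proof (rule vec_inj[OF u])
    fix j :: int assume j: "j \<in> {0, 1, 2}"
    define i where "i = (j - k) mod 3"
    have i: "i \<in> {0, 1, 2}" unfolding i_def by auto
    have ij: "(i + k) mod 3 = j" unfolding i_def using j by (auto simp: mod_simps)
    have "Phi (u, k) (0, i) = Phi (u', k') (0, i)" using eq xx yy by simp
    then have "vec u ((i + k) mod 3) mod N = vec u' ((i + k) mod 3) mod N" using kk by (simp add: Phi_app[OF i])
    then show "vec u j mod N = vec u' j mod N" by (simp only: ij)
  qed
  with kk xx yy show "x = y" by simp
qed

definition "sg0 = pm N (\<lambda>i. 0) 1"
definition "sg1 = pm N (\<lambda>i. - v1 i) 2"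
abbreviation "Gen \<equiv> generate PP {sg0, sg1}"
abbreviation "Ngen \<equiv> generate PP {sg0 \<otimes>\<^bsub>PP\<^esub> sg1, sg1 \<otimes>\<^bsub>PP\<^esub> sg0}"
abbreviation "Hgen \<equiv> generate PP {sg0}"

lemma pm_mult0: "pm N x 0 \<otimes>\<^bsub>PP\<^esub> pm N y 0 = pm N (\<lambda>i. x i + y i) 0"
  unfolding pm_mult[OF N_pos] by (rule pm_eq) (auto simp: add.commute)

lemma s01: "sg0 \<otimes>\<^bsub>PP\<^esub> sg1 = pm N (\<lambda>i. - v1 i) 0"
  unfolding sg0_def sg1_def pm_mult[OF N_pos] by (rule pm_eq) auto

lemma s10: "sg1 \<otimes>\<^bsub>PP\<^esub> sg0 = pm N (\<lambda>i. - v2 i) 0"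
  unfolding sg0_def sg1_def pm_mult[OF N_pos] by (rule pm_eq) (auto simp: v1_def v2_def)

lemma sg_closed: "sg0 \<in> carrier PP" "sg1 \<in> carrier PP"
  unfolding sg0_def sg1_def using pm_Bij[OF N_pos] by (auto simp: BijGroup_def)

lemma inN1: "sg0 \<otimes>\<^bsub>PP\<^esub> sg1 \<in> Ngen" by (rule generate.incl) simp
lemma inN2: "sg1 \<otimes>\<^bsub>PP\<^esub> sg0 \<in> Ngen" by (rule generate.incl) simp
lemma inH: "sg0 \<in> Hgen" by (rule generate.incl) simp

lemma T_in: "pm N (\<lambda>i. - int a * v1 i - int b * v2 i) 0 \<in> Ngen"
proof (induction a)
  case 0
  show ?case
  proof (induction b)
    case 0
    have "pm N (\<lambda>i. - int 0 * v1 i - int 0 * v2 i) 0 = \<one>\<^bsub>PP\<^esub>"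
      by (simp add: pm_one[OF N_pos])
    then show ?case by (simp add: generate.one)
  next
    case (Suc b)
    have "pm N (\<lambda>i. - int 0 * v1 i - int (Suc b) * v2 i) 0
        = (sg1 \<otimes>\<^bsub>PP\<^esub> sg0) \<otimes>\<^bsub>PP\<^esub> pm N (\<lambda>i. - int 0 * v1 i - int b * v2 i) 0"
      unfolding s10 pm_mult0 by (rule pm_eq) (auto simp: algebra_simps)
    then show ?case using generate.eng[OF inN2 Suc] by simp
  qed
next
  case (Suc a)
  have "pm N (\<lambda>i. - int (Suc a) * v1 i - int b * v2 i) 0
      = (sg0 \<otimes>\<^bsub>PP\<^esub> sg1) \<otimes>\<^bsub>PP\<^esub> pm N (\<lambda>i. - int a * v1 i - int b * v2 i) 0"
    unfolding s01 pm_mult0 by (rule pm_eq) (auto simp: algebra_simps)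
  then show ?case using generate.eng[OF inN1 Suc] by simp
qed

lemma R_in: "pm N (\<lambda>i. 0) (int k) \<in> Hgen"
proof (induction k)
  case 0
  then show ?case by (simp add: pm_one[OF N_pos, symmetric] generate.one)
next
  case (Suc k)
  have "pm N (\<lambda>i. 0) (int (Suc k)) = sg0 \<otimes>\<^bsub>PP\<^esub> pm N (\<lambda>i. 0) (int k)"
    unfolding sg0_def pm_mult[OF N_pos] by (rule pm_eq) auto
  then show ?case using generate.eng[OF inH Suc] by simp
qed

lemma cong_helper: "x mod N = x' mod N \<Longrightarrow> y mod N = y' mod N \<Longrightarrow>
   (x * s + y * t) mod N = (x' * s + y' * t) mod N"
  by (metis mod_add_cong mod_mult_cong)

lemma vec_u0: "vec (N - 1, 0) j mod N = (- v1 j) mod N"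
proof -
  have "vec (N - 1, 0) j - (- v1 j) = N * v1 j" by (simp add: vec_def algebra_simps)
  then show ?thesis by (simp add: mod_eq_dvd_iff)
qed

lemma vec_u1: assumes j: "j \<in> {0, 1, 2}" shows "vec ((- c) mod N, int q - 1) j mod N = (- v2 j) mod N"
proof -
  have "vec ((- c) mod N, int q - 1) j = ((- c) mod N) * v1 j + (int q - 1) * w j"
    by (simp add: vec_def)
  also have "\<dots> = (- c - N * ((- c) div N)) * v1 j + int q * w j - w j"
    by (simp add: minus_div_mult_eq_mod[symmetric] algebra_simps)
  also have "\<dots> = - v2 j + N * ((w j div \<alpha>) - ((- c) div N) * v1 j)"
    using qw[OF j] by (simp add: w_def algebra_simps)
  finally have "vec ((- c) mod N, int q - 1) j - (- v2 j) = N * ((w j div \<alpha>) - ((- c) div N) * v1 j)" by simp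
  then show ?thesis by (simp add: mod_eq_dvd_iff)
qed

lemma PhiN: assumes u: "u \<in> carrier AA" shows "Phi (u, 0) \<in> Ngen"
proof -
  obtain a b where ab: "u = (a, b)" by fastforce
  define a' where "a' = nat ((b * c - a) mod N)"
  define b' where "b' = nat ((- b) mod N)"
  have a': "int a' = (b * c - a) mod N" unfolding a'_def using N_pos by simp
  have b': "int b' = (- b) mod N" unfolding b'_def using N_pos by simp
  have "Phi (u, 0) = pm N (\<lambda>i. - int a' * v1 i - int b' * v2 i) 0"
    unfolding Phi_def fst_conv snd_conv
  proof (rule pm_eq)
    fix i :: int assume i: "i \<in> {0, 1, 2}"
    have "vec u ((i + 0) mod 3) = (a - b * c) * v1 i + b * v2 i"
      using i by (auto simp: ab vec_lin)
    moreover have "(- int a' * v1 i - int b' * v2 i) mod N = ((a - b * c) * v1 i + b * v2 i) mod N"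
    proof -
      have "(- int a') mod N = (a - b * c) mod N" unfolding a'
        by (simp add: mod_minus_eq)
      moreover have "(- int b') mod N = b mod N" unfolding b'
        by (simp add: mod_minus_eq)
      ultimately have "((- int a') * v1 i + (- int b') * v2 i) mod N = ((a - b * c) * v1 i + b * v2 i) mod N"
        by (rule cong_helper)
      then show ?thesis by simp
    qed
    ultimately show "vec u ((i + 0) mod 3) mod N = (- int a' * v1 i - int b' * v2 i) mod N" by simp
  qed simp
  then show ?thesis using T_in by simp
qed

lemma vec00[simp]: "vec (0, 0) j = 0" by (simp add: vec_def)

lemma PhiH: assumes k: "k \<in> {0, 1, 2}" shows "Phi ((0, 0), k) \<in> Hgen"
proof -
  have kk: "int (nat k) = k" using k by auto
  have e: "Phi ((0, 0), k) = pm N (\<lambda>i. 0) (int (nat k))"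
    unfolding kk by (simp add: Phi_def)
  show ?thesis by (subst e) (rule R_in)
qed

lemma Phi_split: "Phi (u, k) = Phi (u, 0) \<otimes>\<^bsub>PP\<^esub> Phi ((0, 0), k)"
  unfolding Phi_def fst_conv snd_conv pm_mult[OF N_pos]
  by (rule pm_eq) auto


lemma u0_in: "(N - 1, 0) \<in> carrier AA" using N_pos q_pos by simp
lemma u1_in: "((- c) mod N, int q - 1) \<in> carrier AA" using N_pos q_pos by simp

lemma s01_Phi: "sg0 \<otimes>\<^bsub>PP\<^esub> sg1 = Phi ((N - 1, 0), 0)"
  unfolding s01 Phi_def fst_conv snd_conv
proof (rule pm_eq)
  fix i :: int assume i: "i \<in> {0, 1, 2}"
  then have "(i + 0) mod 3 = i" by auto
  then show "- v1 i mod N = vec (N - 1, 0) ((i + 0) mod 3) mod N" using vec_u0 by simp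
qed simp

lemma s10_Phi: "sg1 \<otimes>\<^bsub>PP\<^esub> sg0 = Phi (((- c) mod N, int q - 1), 0)"
  unfolding s10 Phi_def fst_conv snd_conv
proof (rule pm_eq)
  fix i :: int assume i: "i \<in> {0, 1, 2}"
  then have "(i + 0) mod 3 = i" by auto
  then show "- v2 i mod N = vec ((- c) mod N, int q - 1) ((i + 0) mod 3) mod N" using vec_u1[OF i] by simp
qed simp

lemma sg0_Phi: "sg0 = Phi ((0, 0), 1)"
  unfolding sg0_def Phi_def by simp

lemma sg1_Phi: "sg1 = Phi (((- c) mod N, int q - 1), 2)"
  unfolding sg1_def Phi_def fst_conv snd_conv
proof (rule pm_eq)
  fix i :: int assume i: "i \<in> {0, 1, 2}"
  have i2: "(i + 2) mod 3 \<in> {0, 1, 2}" by auto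
  have "v2 ((i + 2) mod 3) = v1 i" using i by (auto simp: v1_def v2_def)
  then show "- v1 i mod N = vec ((- c) mod N, int q - 1) ((i + 2) mod 3) mod N"
    using vec_u1[OF i2] by simp
qed simp

lemma Ngen_eq: "Ngen = Phi ` (carrier AA \<times> {0})"
proof
  have sub: "subgroup (Phi ` (carrier AA \<times> {0})) PP"
    using group_hom.subgroup_img_is_subgroup[OF Phi_grouphom sdp.sdp_subN[OF sdp_inst]] by simp
  have "{sg0 \<otimes>\<^bsub>PP\<^esub> sg1, sg1 \<otimes>\<^bsub>PP\<^esub> sg0} \<subseteq> Phi ` (carrier AA \<times> {0})"
    using u0_in u1_in unfolding s01_Phi s10_Phi by blast
  then show "Ngen \<subseteq> Phi ` (carrier AA \<times> {0})"
    by (rule group.generate_subgroup_incl[OF groupPP _ sub])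
  show "Phi ` (carrier AA \<times> {0}) \<subseteq> Ngen"
    using PhiN by blast
qed

lemma Hgen_eq: "Hgen = Phi ` ({(0, 0)} \<times> carrier BB)"
proof
  have sub: "subgroup (Phi ` ({(0, 0)} \<times> carrier BB)) PP"
    using group_hom.subgroup_img_is_subgroup[OF Phi_grouphom sdp.sdp_subH[OF sdp_inst]] by simp
  have "{sg0} \<subseteq> Phi ` ({(0, 0)} \<times> carrier BB)"
    unfolding sg0_Phi by (auto simp: carrierBB)
  then show "Hgen \<subseteq> Phi ` ({(0, 0)} \<times> carrier BB)"
    by (rule group.generate_subgroup_incl[OF groupPP _ sub])
  show "Phi ` ({(0, 0)} \<times> carrier BB) \<subseteq> Hgen"
  proof
    fix g assume "g \<in> Phi ` ({(0, 0)} \<times> carrier BB)"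
    then obtain k where k: "k \<in> carrier BB" "g = Phi ((0, 0), k)" by blast
    then have "k \<in> {0, 1, 2}" by (auto simp: carrierBB)
    then show "g \<in> Hgen" using PhiH k(2) by simp
  qed
qed

lemma Gen_eq: "Gen = Phi ` carrier SS"
proof
  have sub: "subgroup (Phi ` carrier SS) PP"
    by (rule group_hom.img_is_subgroup[OF Phi_grouphom])
  have "{sg0, sg1} \<subseteq> Phi ` carrier SS"
  proof -
    have "((0, 0), 1) \<in> carrier SS" using N_pos q_pos by (simp add: carrierBB)
    moreover have "(((- c) mod N, int q - 1), 2) \<in> carrier SS"
      using u1_in by (simp add: carrierBB)
    ultimately show ?thesis unfolding sg0_Phi sg1_Phi by blast
  qed
  then show "Gen \<subseteq> Phi ` carrier SS"
    by (rule group.generate_subgroup_incl[OF groupPP _ sub])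
  have gsub: "subgroup Gen PP"
    by (rule group.generate_is_subgroup[OF groupPP]) (use sg_closed in auto)
  have NG: "Ngen \<subseteq> Gen"
  proof (rule group.generate_subgroup_incl[OF groupPP _ gsub])
    have a: "sg0 \<in> Gen" by (rule generate.incl) simp
    have b: "sg1 \<in> Gen" by (rule generate.incl) simp
    have "sg0 \<otimes>\<^bsub>PP\<^esub> sg1 \<in> Gen" by (rule generate.eng[OF a b])
    moreover have "sg1 \<otimes>\<^bsub>PP\<^esub> sg0 \<in> Gen" by (rule generate.eng[OF b a])
    ultimately show "{sg0 \<otimes>\<^bsub>PP\<^esub> sg1, sg1 \<otimes>\<^bsub>PP\<^esub> sg0} \<subseteq> Gen" by simp
  qed
  have HG: "Hgen \<subseteq> Gen"
    by (rule group.mono_generate[OF groupPP]) auto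
  show "Phi ` carrier SS \<subseteq> Gen"
  proof
    fix g assume "g \<in> Phi ` carrier SS"
    then obtain u k where uk: "u \<in> carrier AA" "k \<in> carrier BB" "g = Phi (u, k)" by auto
    have k: "k \<in> {0, 1, 2}" using uk by (auto simp: carrierBB)
    have "Phi (u, 0) \<in> Gen" using PhiN[OF uk(1)] NG by blast
    moreover have "Phi ((0, 0), k) \<in> Gen" using PhiH[OF k] HG by blast
    ultimately have "Phi (u, 0) \<otimes>\<^bsub>PP\<^esub> Phi ((0, 0), k) \<in> Gen" by (rule generate.eng)
    then have "Phi (u, k) \<in> Gen" by (simp only: Phi_split[of u k])
    then show "g \<in> Gen" using uk(3) by simp
  qed
qed

abbreviation "Gq \<equiv> PP\<lparr>carrier := Gen\<rparr>"

lemma groupGq: "group Gq"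
proof -
  have "subgroup Gen PP"
    by (rule group.generate_is_subgroup[OF groupPP]) (use sg_closed in auto)
  then show ?thesis by (rule subgroup.subgroup_is_group[OF _ groupPP])
qed

lemma Phi_iso: "Phi \<in> iso SS Gq"
proof (rule isoI)
  show "Phi \<in> hom SS Gq"
    unfolding hom_def using Gen_eq Phi_mult by auto
  show "bij_betw Phi (carrier SS) (carrier Gq)"
    unfolding bij_betw_def using Phi_inj Gen_eq by simp
qed

lemma main_loc: "internal_semidirect Gq Ngen Hgen \<and> aut_action AA BB phi \<and> Gq \<cong> SS"
proof (intro conjI)
  have "internal_semidirect Gq (Phi ` (carrier AA \<times> {\<one>\<^bsub>BB\<^esub>})) (Phi ` ({\<one>\<^bsub>AA\<^esub>} \<times> carrier BB))"
    by (rule sdp.transfer[OF sdp_inst groupGq Phi_iso])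
  then show "internal_semidirect Gq Ngen Hgen"
    unfolding Ngen_eq Hgen_eq by simp
  show "aut_action AA BB phi" by (rule aut)
  show "Gq \<cong> SS"
    by (rule group.iso_sym[OF groupSS is_isoI[OF Phi_iso]])
qed

end

lemma (in dz) sigma0_eq: "dessin_sigma0 n = sg0"
proof (rule ext)
  fix z show "dessin_sigma0 n z = sg0 z"
  proof (cases "z \<in> Ed N")
    case True
    then obtain m i where z: "z = (m, i)" "0 \<le> m" "m < N" "0 \<le> i" "i < 3" by (auto simp: Ed_def)
    then show ?thesis
      by (simp add: dessin_sigma0_def dessin_edges_def sg0_def pm_app)
  next
    case False
    then show ?thesis
      by (simp add: dessin_sigma0_def dessin_edges_def sg0_def pm_def Ed_def)
  qed
qed

lemma (in dz) sigma1_eq: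
  assumes "p0 = int p0'" "p1 = int p1'" "p2 = int p2'"
  shows "dessin_sigma1 n p0' p1' p2' = sg1"
proof (rule ext)
  fix z show "dessin_sigma1 n p0' p1' p2' z = sg1 z"
  proof (cases "z \<in> Ed N")
    case True
    then obtain m i where z: "z = (m, i)" "0 \<le> m" "m < N" "0 \<le> i" "i < 3" by (auto simp: Ed_def)
    then have "i = 0 \<or> i = 1 \<or> i = 2" by auto
    then show ?thesis using z
      by (auto simp: dessin_sigma1_def dessin_edges_def sg1_def pm_app v1_def assms[symmetric])
  next
    case False
    then show ?thesis
      by (simp add: dessin_sigma1_def dessin_edges_def sg1_def pm_def Ed_def)
  qed
qed

lemma exists_c:
  fixes p0 p1 p2 a :: int
  assumes g1: "gcd p0 (gcd p1 p2) = 1" and an: "a dvd p0 + p1 + p2" and aD: "a dvd p0 * p1 - p2^2"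
  shows "\<exists>c. a dvd p2 - c * p1 \<and> a dvd p0 - c * p2 \<and> a dvd p1 - c * p0"
proof -
  define g where "g = gcd (gcd p1 p2) a"
  have "g dvd p1" unfolding g_def using gcd_dvd1[of "gcd p1 p2" a] gcd_dvd1[of p1 p2] by (rule dvd_trans)
  have "g dvd p2" unfolding g_def using gcd_dvd1[of "gcd p1 p2" a] gcd_dvd2[of p1 p2] by (rule dvd_trans)
  have "g dvd a" unfolding g_def by simp
  have "g dvd p0 + p1 + p2" using \<open>g dvd a\<close> an by (rule dvd_trans)
  then have "g dvd (p0 + p1 + p2) - p1 - p2" using \<open>g dvd p1\<close> \<open>g dvd p2\<close> by (intro dvd_diff)
  then have "g dvd p0" by simp
  then have "g dvd gcd p0 (gcd p1 p2)" using \<open>g dvd p1\<close> \<open>g dvd p2\<close> by simp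
  then have "g dvd 1" using g1 by simp
  then have g1': "g = 1" unfolding g_def by simp
  obtain s t where st: "s * p1 + t * p2 = gcd p1 p2" using bezout_int by blast
  obtain u r where ur: "u * gcd p1 p2 + r * a = g" unfolding g_def using bezout_int by blast
  define s' where "s' = u * s"
  define t' where "t' = u * t"
  have bez: "s' * p1 + t' * p2 + r * a = 1"
    using st ur g1' unfolding s'_def t'_def by (metis distrib_left mult.assoc)
  define c where "c = s' * p2 + t' * p0"
  have e0: "p2 - c * p1 = - t' * (p0 * p1 - p2^2) + (p2 * r) * a"
  proof -
    have "p2 - c * p1 = p2 * (s' * p1 + t' * p2 + r * a) - c * p1" using bez by simp
    also have "\<dots> = - t' * (p0 * p1 - p2^2) + (p2 * r) * a"
      by (simp add: c_def algebra_simps power2_eq_square)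
    finally show ?thesis .
  qed
  have e1: "p0 - c * p2 = s' * (p0 * p1 - p2^2) + (p0 * r) * a"
  proof -
    have "p0 - c * p2 = p0 * (s' * p1 + t' * p2 + r * a) - c * p2" using bez by simp
    also have "\<dots> = s' * (p0 * p1 - p2^2) + (p0 * r) * a"
      by (simp add: c_def algebra_simps power2_eq_square)
    finally show ?thesis .
  qed
  have d0: "a dvd p2 - c * p1" unfolding e0 using aD by simp
  have d1: "a dvd p0 - c * p2" unfolding e1 using aD by simp
  have e2: "p1 - c * p0 = (1 - c) * (p0 + p1 + p2) - (p2 - c * p1) - (p0 - c * p2)"
    by (simp add: algebra_simps)
  have d2: "a dvd p1 - c * p0" unfolding e2 using an d0 d1 by simp
  show ?thesis using d0 d1 d2 by blast
qed

theorem theorem1: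
  fixes p0 p1 p2 n \<alpha> :: nat
  assumes "p0 > 0" and "p1 > 0" and "p2 > 0"
    and "gcd p0 (gcd p1 p2) = 1"
    and "n = p0 + p1 + p2"
    and "\<alpha> = nat (gcd (int n) (int p0 * int p1 - (int p2)^2))"
  shows
    "let E = dessin_edges n; s0 = dessin_sigma0 n; s1 = dessin_sigma1 n p0 p1 p2;
         G = perm_subgroup E {s0, s1};
         N = generate (BijGroup E) {s0 \<otimes>\<^bsub>BijGroup E\<^esub> s1, s1 \<otimes>\<^bsub>BijGroup E\<^esub> s0};
         H = generate (BijGroup E) {s0}
     in internal_semidirect G N H \<and>
        (\<exists>\<phi>. aut_action (cyclic_grp n \<times>\<times> cyclic_grp (n div \<alpha>)) (cyclic_grp 3) \<phi> \<and>
             G \<cong> semidirect_prod (cyclic_grp n \<times>\<times> cyclic_grp (n div \<alpha>)) (cyclic_grp 3) \<phi>)"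
proof -
  define ai where "ai = gcd (int n) (int p0 * int p1 - (int p2)^2)"
  have ai_ge: "ai \<ge> 0" unfolding ai_def by simp
  have ai: "int \<alpha> = ai" using assms(6) ai_ge unfolding ai_def by simp
  have aidvd: "ai dvd int n" unfolding ai_def by simp
  then have "int \<alpha> dvd int n" using ai by simp
  then have adv: "\<alpha> dvd n" by simp
  have nq0: "\<alpha> * (n div \<alpha>) = n" by (rule dvd_mult_div_cancel[OF adv])
  have "int n = int (\<alpha> * (n div \<alpha>))" by (simp only: nq0)
  also have "\<dots> = int \<alpha> * int (n div \<alpha>)" by (rule of_nat_mult)
  finally have nq: "int n = ai * int (n div \<alpha>)" by (simp only: ai)
  have g1: "gcd (int p0) (gcd (int p1) (int p2)) = 1"
    using assms(4) by simp
  have nsum: "int n = int p0 + int p1 + int p2" using assms(5) by simp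
  have an: "ai dvd int p0 + int p1 + int p2" using aidvd nsum by simp
  have aD: "ai dvd int p0 * int p1 - (int p2)^2" unfolding ai_def by simp
  obtain c where c: "ai dvd int p2 - c * int p1" "ai dvd int p0 - c * int p2" "ai dvd int p1 - c * int p0"
    using exists_c[OF g1 an aD] by blast
  have pos: "int p0 > 0" "int p1 > 0" "int p2 > 0" using assms(1-3) by simp_all
  interpret d: dz "int p0" "int p1" "int p2" n "n div \<alpha>" ai c
    by (rule dz.intro[OF pos g1 nsum ai_def nq c])
  have E: "dessin_edges n = Ed (int n)" by (simp add: dessin_edges_def Ed_def)
  have s0: "dessin_sigma0 n = d.sg0" by (rule d.sigma0_eq)
  have s1: "dessin_sigma1 n p0 p1 p2 = d.sg1" by (rule d.sigma1_eq) auto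
  have h1: "internal_semidirect d.Gq d.Ngen d.Hgen" and h2: "aut_action d.AA d.BB d.phi"
    and h3: "d.Gq \<cong> d.SS"
    using d.main_loc by auto
  show ?thesis
    unfolding Let_def E s0 s1 perm_subgroup_def
    apply (intro conjI exI[where x = d.phi])
      apply (rule h1)
     apply (rule h2)
    apply (rule h3)
    done
qed

end
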